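(* (a) Let $x\in P$ and $(y,v')\in\mathcal{P}$ with $x\neq y$ and $v'\notin x'^{\perp}$ in $S'$. Then $d(x,(y,v'))=3$ in $\mathbb{S}$. (b) Let $u'\in P'$ and $(y,v')\in\mathcal{P}$ with $u'\neq v'$ and $y\notin u^{\perp}$ in $S$. Then $d(u',(y,v'))=3$ in $\mathbb{S}$.
   Context: Let $S=(P,L)$ and $S'=(P',L')$ be generalized quadrangles of order $(2,2)$ (every line has 3 points, every point lies on 3 lines, and for each point $x$ and line $l\not\ni x$ exactly one point of $l$ is collinear with $x$), with an isomorphism $x\mapsto x'$ from $S$ to $S'$ (write $u$ for the preimage of $u'\in P'$). In a point-line geometry, $x^{\perp}$ is $x$ together with all points collinear with $x$, and $A^{\perp}=\bigcap_{a\in A}a^{\perp}$. A triad is a set of three pairwise non-collinear points, complete if $|T^{\perp}|=3$. Let $\mathcal{P}=\{(x,y')\in P\times P':y'\in x'^{\perp}\}$ and $\mathcal{L}$ the set of all $3$-subsets $\{(x,u'),(y,v'),(z,w')\}$ of $\mathcal{P}$ where $T=\{x,y,z\}$ (three distinct points) is a line or complete triad of $S$ and $\{u',v',w'\}=T'^{\perp}$ in $S'$ with $u',v',w'$ distinct. The geometry $\mathbb{S}=(\mathbb{P},\mathbb{L})$ has point set $\mathbb{P}=\mathcal{P}\cup P\cup P'$ (disjoint union) and line set $\mathcal{L}\cup\{\{x,(x,u'),u'\}:(x,u')\in\mathcal{P}\}$. Distance $d$ is in the collinearity graph of $\mathbb{S}$. *)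

theory Defs
  imports Main "HOL-Library.Extended_Nat"
begin

definition collinear :: "'a set \<Rightarrow> 'a set set \<Rightarrow> 'a \<Rightarrow> 'a \<Rightarrow> bool" where
  "collinear P L x y \<longleftrightarrow> x \<in> P \<and> y \<in> P \<and> x \<noteq> y \<and> (\<exists>l\<in>L. x \<in> l \<and> y \<in> l)"

definition perp :: "'a set \<Rightarrow> 'a set set \<Rightarrow> 'a \<Rightarrow> 'a set" where
  "perp P L x = {x} \<union> {y. collinear P L x y}"

definition perp_set :: "'a set \<Rightarrow> 'a set set \<Rightarrow> 'a set \<Rightarrow> 'a set" where
  "perp_set P L A = {y \<in> P. \<forall>a\<in>A. y \<in> perp P L a}"

definition gq22 :: "'a set \<Rightarrow> 'a set set \<Rightarrow> bool" where
  "gq22 P L \<longleftrightarrow>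
     (\<forall>l\<in>L. l \<subseteq> P \<and> card l = 3) \<and>
     (\<forall>x\<in>P. card {l\<in>L. x \<in> l} = 3) \<and>
     (\<forall>x\<in>P. \<forall>l\<in>L. x \<notin> l \<longrightarrow> (\<exists>!y. y \<in> l \<and> collinear P L x y))"

definition triad :: "'a set \<Rightarrow> 'a set set \<Rightarrow> 'a set \<Rightarrow> bool" where
  "triad P L T \<longleftrightarrow> T \<subseteq> P \<and> card T = 3 \<and> (\<forall>a\<in>T. \<forall>b\<in>T. \<not> collinear P L a b)"

definition complete_triad :: "'a set \<Rightarrow> 'a set set \<Rightarrow> 'a set \<Rightarrow> bool" where
  "complete_triad P L T \<longleftrightarrow> triad P L T \<and> card (perp_set P L T) = 3"

definition gq_iso :: "'a set \<Rightarrow> 'a set set \<Rightarrow> 'b set \<Rightarrow> 'b set set \<Rightarrow> ('a \<Rightarrow> 'b) \<Rightarrow> bool" where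
  "gq_iso P L P' L' f \<longleftrightarrow> bij_betw f P P' \<and> (\<lambda>l. f ` l) ` L = L'"

datatype ('a, 'b) spt = Pr 'a 'b | Lp 'a | Rp 'b

definition calP :: "'a set \<Rightarrow> 'a set set \<Rightarrow> 'b set \<Rightarrow> 'b set set \<Rightarrow> ('a \<Rightarrow> 'b) \<Rightarrow> ('a \<times> 'b) set" where
  "calP P L P' L' f = {(x, y'). x \<in> P \<and> y' \<in> perp P' L' (f x)}"

definition calL :: "'a set \<Rightarrow> 'a set set \<Rightarrow> 'b set \<Rightarrow> 'b set set \<Rightarrow> ('a \<Rightarrow> 'b) \<Rightarrow> ('a, 'b) spt set set" where
  "calL P L P' L' f =
    {{Pr x u', Pr y v', Pr z w'} | x y z u' v' w'.
        (x, u') \<in> calP P L P' L' f \<and> (y, v') \<in> calP P L P' L' f \<and> (z, w') \<in> calP P L P' L' f \<and>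
        x \<noteq> y \<and> y \<noteq> z \<and> x \<noteq> z \<and>
        ({x, y, z} \<in> L \<or> complete_triad P L {x, y, z}) \<and>
        u' \<noteq> v' \<and> v' \<noteq> w' \<and> u' \<noteq> w' \<and>
        {u', v', w'} = perp_set P' L' (f ` {x, y, z})}"

definition bbP :: "'a set \<Rightarrow> 'a set set \<Rightarrow> 'b set \<Rightarrow> 'b set set \<Rightarrow> ('a \<Rightarrow> 'b) \<Rightarrow> ('a, 'b) spt set" where
  "bbP P L P' L' f = {Pr x y' | x y'. (x, y') \<in> calP P L P' L' f} \<union> Lp ` P \<union> Rp ` P'"

definition bbL :: "'a set \<Rightarrow> 'a set set \<Rightarrow> 'b set \<Rightarrow> 'b set set \<Rightarrow> ('a \<Rightarrow> 'b) \<Rightarrow> ('a, 'b) spt set set" where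
  "bbL P L P' L' f = calL P L P' L' f \<union>
     {{Lp x, Pr x u', Rp u'} | x u'. (x, u') \<in> calP P L P' L' f}"

definition walk :: "'p set \<Rightarrow> 'p set set \<Rightarrow> nat \<Rightarrow> 'p \<Rightarrow> 'p \<Rightarrow> bool" where
  "walk P L n a b \<longleftrightarrow> (\<exists>p :: nat \<Rightarrow> 'p. p 0 = a \<and> p n = b \<and> (\<forall>i\<le>n. p i \<in> P) \<and>
       (\<forall>i<n. collinear P L (p i) (p (Suc i))))"

text \<open>Graph distance; infinity if no walk exists\<close>
definition gdist :: "'p set \<Rightarrow> 'p set set \<Rightarrow> 'p \<Rightarrow> 'p \<Rightarrow> enat" where
  "gdist P L a b = (INF n \<in> {n. walk P L n a b}. enat n)"

end

theory Submission
  imports Defs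
begin

lemma perp_sym: "b \<in> perp P L a \<longleftrightarrow> a \<in> perp P L b"
  unfolding perp_def collinear_def by blast

lemma perp_sub: "a \<in> P \<Longrightarrow> perp P L a \<subseteq> P"
  unfolding perp_def collinear_def by blast

lemma perp_self: "a \<in> perp P L a"
  unfolding perp_def by blast

lemma gq_common:
  assumes g: "gq22 P L" and ab: "a \<in> P" "b \<in> P" "a \<noteq> b"
  shows "\<exists>u\<in>P. u \<in> perp P L a \<and> u \<in> perp P L b"
proof (cases "collinear P L a b")
  case True
  then have "a \<in> perp P L a" "a \<in> perp P L b" unfolding perp_def collinear_def by auto
  then show ?thesis using ab by blast
next
  case False
  have g1: "\<forall>l\<in>L. l \<subseteq> P \<and> card l = 3" and g2: "\<forall>x\<in>P. card {l\<in>L. x \<in> l} = 3"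
    and g3: "\<forall>x\<in>P. \<forall>l\<in>L. x \<notin> l \<longrightarrow> (\<exists>!y. y \<in> l \<and> collinear P L x y)"
    using g unfolding gq22_def by (meson conjunct1, meson conjunct1 conjunct2, meson conjunct2)
  have "card {l\<in>L. b \<in> l} = 3" using g2 ab by blast
  then have "{l\<in>L. b \<in> l} \<noteq> {}" by (metis card.empty zero_neq_numeral)
  then obtain l where l: "l \<in> L" "b \<in> l" by blast
  have lP: "l \<subseteq> P" using g1 l by blast
  have "a \<notin> l"
  proof
    assume "a \<in> l"
    then have "collinear P L a b" unfolding collinear_def using ab l by blast
    then show False using False by simp
  qed
  then have "\<exists>!y. y \<in> l \<and> collinear P L a y" using g3 ab(1) l(1) by blast
  then obtain u where u: "u \<in> l" "collinear P L a u" by blast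
  have "u \<noteq> b" using u False by blast
  then have "collinear P L b u" using u(1) l lP ab(2) unfolding collinear_def by blast
  then have "u \<in> perp P L b" "u \<in> perp P L a" "u \<in> P" using u lP unfolding perp_def by auto
  then show ?thesis by blast
qed

lemma iso_refl:
  assumes i: "gq_iso P L P' L' f" and g: "gq22 P L" and ab: "a \<in> P" "b \<in> P"
    and h: "f b \<in> perp P' L' (f a)"
  shows "b \<in> perp P L a"
proof -
  have bij: "bij_betw f P P'" and LL: "(\<lambda>l. f ` l) ` L = L'" using i unfolding gq_iso_def by auto
  have inj: "inj_on f P" using bij bij_betw_def by blast
  show ?thesis
  proof (cases "f b = f a")
    case True then show ?thesis using inj ab unfolding perp_def inj_on_def by blast
  next
    case False
    then obtain l' where "l' \<in> L'" "f a \<in> l'" "f b \<in> l'" using h unfolding perp_def collinear_def by blast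
    then obtain l where l: "l \<in> L" "f a \<in> f ` l" "f b \<in> f ` l" using LL by blast
    have lP: "l \<subseteq> P" using g l unfolding gq22_def by blast
    have "a \<in> l" "b \<in> l" using l lP ab inj unfolding inj_on_def by blast+
    then show ?thesis using False l ab unfolding perp_def collinear_def by blast
  qed
qed

lemma calL_noLR:
  assumes "l \<in> calL P L P' L' f"
  shows "Lp a \<notin> l" "Rp b \<notin> l"
proof -
  obtain x y z u' v' w' where "l = {Pr x u', Pr y v', Pr z w'}"
    using assms unfolding calL_def by blast
  then show "Lp a \<notin> l" "Rp b \<notin> l" by auto
qed

lemma col_Lp:
  assumes "collinear (bbP P L P' L' f) (bbL P L P' L' f) (Lp x) q"
  shows "\<exists>u'. (x,u') \<in> calP P L P' L' f \<and> (q = Pr x u' \<or> q = Rp u')"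
proof -
  obtain l where l: "l \<in> bbL P L P' L' f" "Lp x \<in> l" "q \<in> l" "q \<noteq> Lp x"
    using assms unfolding collinear_def by blast
  have "l \<notin> calL P L P' L' f" using l calL_noLR by metis
  then obtain z u' where e: "l = {Lp z, Pr z u', Rp u'}" "(z, u') \<in> calP P L P' L' f"
    using l(1) unfolding bbL_def by blast
  then have "z = x" using l by simp
  then show ?thesis using e l by auto
qed

lemma col_Rp:
  assumes "collinear (bbP P L P' L' f) (bbL P L P' L' f) (Rp u') q"
  shows "\<exists>z. (z,u') \<in> calP P L P' L' f \<and> (q = Pr z u' \<or> q = Lp z)"
proof -
  obtain l where l: "l \<in> bbL P L P' L' f" "Rp u' \<in> l" "q \<in> l" "q \<noteq> Rp u'"
    using assms unfolding collinear_def by blast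
  have "l \<notin> calL P L P' L' f" using l calL_noLR by metis
  then obtain z w' where e: "l = {Lp z, Pr z w', Rp w'}" "(z, w') \<in> calP P L P' L' f"
    using l(1) unfolding bbL_def by blast
  then have "w' = u'" using l by simp
  then show ?thesis using e l by auto
qed

lemma col_PrPr:
  assumes "collinear (bbP P L P' L' f) (bbL P L P' L' f) (Pr a b) (Pr c d)"
  shows "b \<in> perp P' L' (f c)"
proof -
  obtain l where l: "l \<in> bbL P L P' L' f" "Pr a b \<in> l" "Pr c d \<in> l" "Pr a b \<noteq> Pr c d"
    using assms unfolding collinear_def by blast
  show ?thesis
  proof (cases "l \<in> calL P L P' L' f")
    case True
    then obtain x y z u' v' w' where e: "l = {Pr x u', Pr y v', Pr z w'}"
      "{u', v', w'} = perp_set P' L' (f ` {x, y, z})" unfolding calL_def by blast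
    have "b \<in> perp_set P' L' (f ` {x, y, z})" "c \<in> {x,y,z}" using l e by auto
    then show ?thesis unfolding perp_set_def by blast
  next
    case False
    then obtain z w' where e: "l = {Lp z, Pr z w', Rp w'}"
      using l(1) unfolding bbL_def by blast
    then show ?thesis using l by auto
  qed
qed

lemma col_intro:
  "l \<in> Ls \<Longrightarrow> a \<in> l \<Longrightarrow> b \<in> l \<Longrightarrow> a \<in> Ps \<Longrightarrow> b \<in> Ps \<Longrightarrow> a \<noteq> b \<Longrightarrow> collinear Ps Ls a b"
  unfolding collinear_def by blast

lemma gdist3:
  assumes "walk P L 3 a b" "\<And>n. n < 3 \<Longrightarrow> \<not> walk P L n a b"
  shows "gdist P L a b = 3"
proof -
  have m: "3 \<in> {n. walk P L n a b}" using assms(1) by simp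
  have 1: "gdist P L a b \<le> enat 3" unfolding gdist_def by (rule INF_lower[OF m])
  have 2: "enat 3 \<le> gdist P L a b" unfolding gdist_def
  proof (rule INF_greatest)
    fix n assume "n \<in> {n. walk P L n a b}"
    then have "\<not> n < 3" using assms(2) by blast
    then show "enat 3 \<le> enat n" by simp
  qed
  have "gdist P L a b = enat 3" using 1 2 by (rule antisym)
  then show ?thesis by (simp add: numeral_eq_enat)
qed

lemma walk3:
  assumes "a \<in> P" "b \<in> P" "c \<in> P" "d \<in> P" "collinear P L a b" "collinear P L b c" "collinear P L c d"
  shows "walk P L 3 a d"
  unfolding walk_def
  apply (rule exI[of _ "\<lambda>i. [a,b,c,d] ! i"])
  using assms by (auto simp: numeral_3_eq_3 less_Suc_eq le_Suc_eq)

lemma walk_small: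
  assumes "walk P L n a b" "n < 3"
  shows "a = b \<or> collinear P L a b \<or> (\<exists>c. collinear P L a c \<and> collinear P L c b)"
proof -
  obtain p where p: "p 0 = a" "p n = b" "\<forall>i<n. collinear P L (p i) (p (Suc i))"
    using assms unfolding walk_def by blast
  have "n = 0 \<or> n = 1 \<or> n = 2" using assms by auto
  then show ?thesis using p by (metis One_nat_def Suc_1 lessI zero_less_Suc)
qed

theorem lemma4p4:
  fixes P :: "'a set" and L :: "'a set set" and P' :: "'b set" and L' :: "'b set set"
    and f :: "'a \<Rightarrow> 'b"
  assumes "gq22 P L" and "gq22 P' L'" and "gq_iso P L P' L' f"
  shows "(\<forall>x y v'. x \<in> P \<longrightarrow> (y, v') \<in> calP P L P' L' f \<longrightarrow> x \<noteq> y \<longrightarrow>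
             v' \<notin> perp P' L' (f x) \<longrightarrow>
             gdist (bbP P L P' L' f) (bbL P L P' L' f) (Lp x) (Pr y v') = 3)
       \<and> (\<forall>u' y v'. u' \<in> P' \<longrightarrow> (y, v') \<in> calP P L P' L' f \<longrightarrow> u' \<noteq> v' \<longrightarrow>
             y \<notin> perp P L (inv_into P f u') \<longrightarrow>
             gdist (bbP P L P' L' f) (bbL P L P' L' f) (Rp u') (Pr y v') = 3)"
proof -
  have bij: "bij_betw f P P'" using assms(3) unfolding gq_iso_def by auto
  have inj: "inj_on f P" using bij bij_betw_def by blast
  have fP: "\<And>a. a \<in> P \<Longrightarrow> f a \<in> P'" using bij bij_betwE by blast
  have calP_iff: "\<And>a b. (a, b) \<in> calP P L P' L' f \<longleftrightarrow> a \<in> P \<and> b \<in> perp P' L' (f a)"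
    unfolding calP_def by auto
  have PrP: "\<And>a b. (a, b) \<in> calP P L P' L' f \<Longrightarrow> Pr a b \<in> bbP P L P' L' f"
    unfolding bbP_def by blast
  have LpP: "\<And>a. a \<in> P \<Longrightarrow> Lp a \<in> bbP P L P' L' f" unfolding bbP_def by blast
  have RpP: "\<And>a. a \<in> P' \<Longrightarrow> Rp a \<in> bbP P L P' L' f" unfolding bbP_def by blast
  have line: "\<And>a b. (a, b) \<in> calP P L P' L' f \<Longrightarrow> {Lp a, Pr a b, Rp b} \<in> bbL P L P' L' f"
    unfolding bbL_def by blast
  have colLR: "collinear (bbP P L P' L' f) (bbL P L P' L' f) (Lp a) (Rp b)"
    "collinear (bbP P L P' L' f) (bbL P L P' L' f) (Rp b) (Lp a)"
    if "(a, b) \<in> calP P L P' L' f" "b \<in> P'" for a b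
  proof -
    have "a \<in> P" using that calP_iff by blast
    then have m: "Lp a \<in> bbP P L P' L' f" "Rp b \<in> bbP P L P' L' f" using LpP RpP that by auto
    show "collinear (bbP P L P' L' f) (bbL P L P' L' f) (Lp a) (Rp b)"
      by (rule col_intro[OF line[OF that(1)]]) (use m in simp_all)
    show "collinear (bbP P L P' L' f) (bbL P L P' L' f) (Rp b) (Lp a)"
      by (rule col_intro[OF line[OF that(1)]]) (use m in simp_all)
  qed
  have colLPr: "collinear (bbP P L P' L' f) (bbL P L P' L' f) (Lp a) (Pr a b)"
    if "(a, b) \<in> calP P L P' L' f" for a b
  proof -
    have "a \<in> P" using that calP_iff by blast
    then have m: "Lp a \<in> bbP P L P' L' f" "Pr a b \<in> bbP P L P' L' f" using LpP PrP that by auto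
    show ?thesis by (rule col_intro[OF line[OF that(1)]]) (use m in simp_all)
  qed
  have colRPr: "collinear (bbP P L P' L' f) (bbL P L P' L' f) (Rp b) (Pr a b)"
    if "(a, b) \<in> calP P L P' L' f" "b \<in> P'" for a b
  proof -
    have m: "Rp b \<in> bbP P L P' L' f" "Pr a b \<in> bbP P L P' L' f" using RpP PrP that by auto
    show ?thesis by (rule col_intro[OF line[OF that(1)]]) (use m in simp_all)
  qed
  have colsym: "\<And>a b. collinear (bbP P L P' L' f) (bbL P L P' L' f) a b \<Longrightarrow>
      collinear (bbP P L P' L' f) (bbL P L P' L' f) b a" unfolding collinear_def by blast
  show ?thesis
  proof (intro conjI allI impI)
    fix x y v'
    assume x: "x \<in> P" and yv: "(y, v') \<in> calP P L P' L' f" and xy: "x \<noteq> y"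
      and v: "v' \<notin> perp P' L' (f x)"
    have y: "y \<in> P" "v' \<in> perp P' L' (f y)" using yv calP_iff by auto
    have "f x \<noteq> f y" using inj x y xy unfolding inj_on_def by blast
    then obtain u' where u: "u' \<in> P'" "u' \<in> perp P' L' (f x)" "u' \<in> perp P' L' (f y)"
      using gq_common[OF assms(2) fP[OF x] fP[OF y(1)]] by blast
    show "gdist (bbP P L P' L' f) (bbL P L P' L' f) (Lp x) (Pr y v') = 3"
    proof (rule gdist3)
      show "walk (bbP P L P' L' f) (bbL P L P' L' f) 3 (Lp x) (Pr y v')"
        apply (rule walk3[where b="Rp u'" and c="Lp y"])
        using x y u yv LpP RpP PrP colLR colLPr calP_iff by auto
    next
      fix n :: nat assume n: "n < 3"
      show "\<not> walk (bbP P L P' L' f) (bbL P L P' L' f) n (Lp x) (Pr y v')"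
      proof
        assume "walk (bbP P L P' L' f) (bbL P L P' L' f) n (Lp x) (Pr y v')"
        from walk_small[OF this n] show False
        proof (elim disjE exE conjE)
          assume "collinear (bbP P L P' L' f) (bbL P L P' L' f) (Lp x) (Pr y v')"
          then show False using col_Lp xy by fastforce
        next
          fix c
          assume c1: "collinear (bbP P L P' L' f) (bbL P L P' L' f) (Lp x) c"
            and c2: "collinear (bbP P L P' L' f) (bbL P L P' L' f) c (Pr y v')"
          obtain w' where w: "(x, w') \<in> calP P L P' L' f" "c = Pr x w' \<or> c = Rp w'"
            using col_Lp[OF c1] by blast
          from w(2) show False
          proof
            assume cp: "c = Pr x w'"
            have "collinear (bbP P L P' L' f) (bbL P L P' L' f) (Pr y v') (Pr x w')"
              using c2 cp colsym by blast
            then have "v' \<in> perp P' L' (f x)" by (rule col_PrPr)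
            then show False using v by blast
          next
            assume cr: "c = Rp w'"
            have cc: "collinear (bbP P L P' L' f) (bbL P L P' L' f) (Rp w') (Pr y v')"
              using c2 cr by simp
            obtain z where "(z, w') \<in> calP P L P' L' f" "Pr y v' = Pr z w' \<or> Pr y v' = Lp z"
              using col_Rp[OF cc] by blast
            then have "v' = w'" by simp
            then show False using w(1) v calP_iff by blast
          qed
        qed simp
      qed
    qed
  next
    fix u' y v'
    assume u: "u' \<in> P'" and yv: "(y, v') \<in> calP P L P' L' f" and uv: "u' \<noteq> v'"
      and ny: "y \<notin> perp P L (inv_into P f u')"
    have y: "y \<in> P" "v' \<in> perp P' L' (f y)" using yv calP_iff by auto
    have vP: "v' \<in> P'" using perp_sub[OF fP[OF y(1)]] y by blast
    obtain w' where w: "w' \<in> P'" "w' \<in> perp P' L' u'" "w' \<in> perp P' L' v'"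
      using gq_common[OF assms(2) u vP uv] by blast
    define z where "z = inv_into P f w'"
    have z: "z \<in> P" "f z = w'" using w(1) bij unfolding z_def
      by (auto simp: bij_betw_def inv_into_into f_inv_into_f)
    define uu where "uu = inv_into P f u'"
    have uu: "uu \<in> P" "f uu = u'" using u bij unfolding uu_def
      by (auto simp: bij_betw_def inv_into_into f_inv_into_f)
    have bad: "u' \<notin> perp P' L' (f y)"
    proof
      assume "u' \<in> perp P' L' (f y)"
      then have "f y \<in> perp P' L' (f uu)" using uu perp_sym by metis
      then have "y \<in> perp P L uu" using iso_refl[OF assms(3) assms(1) uu(1) y(1)] by blast
      then show False using ny uu_def by blast
    qed
    have zu: "(z, u') \<in> calP P L P' L' f" "(z, v') \<in> calP P L P' L' f"
      using z w perp_sym calP_iff by metis+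
    show "gdist (bbP P L P' L' f) (bbL P L P' L' f) (Rp u') (Pr y v') = 3"
    proof (rule gdist3)
      show "walk (bbP P L P' L' f) (bbL P L P' L' f) 3 (Rp u') (Pr y v')"
        apply (rule walk3[where b="Lp z" and c="Rp v'"])
        using z u vP zu yv LpP RpP PrP colLR colRPr by auto
    next
      fix n :: nat assume n: "n < 3"
      show "\<not> walk (bbP P L P' L' f) (bbL P L P' L' f) n (Rp u') (Pr y v')"
      proof
        assume "walk (bbP P L P' L' f) (bbL P L P' L' f) n (Rp u') (Pr y v')"
        from walk_small[OF this n] show False
        proof (elim disjE exE conjE)
          assume "collinear (bbP P L P' L' f) (bbL P L P' L' f) (Rp u') (Pr y v')"
          then show False using col_Rp uv by fastforce
        next
          fix c
          assume c1: "collinear (bbP P L P' L' f) (bbL P L P' L' f) (Rp u') c"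
            and c2: "collinear (bbP P L P' L' f) (bbL P L P' L' f) c (Pr y v')"
          obtain t where t: "(t, u') \<in> calP P L P' L' f" "c = Pr t u' \<or> c = Lp t"
            using col_Rp[OF c1] by blast
          from t(2) show False
          proof
            assume cp: "c = Pr t u'"
            have "collinear (bbP P L P' L' f) (bbL P L P' L' f) (Pr t u') (Pr y v')"
              using c2 cp by simp
            then have "u' \<in> perp P' L' (f y)" by (rule col_PrPr)
            then show False using bad by blast
          next
            assume cl: "c = Lp t"
            have cc: "collinear (bbP P L P' L' f) (bbL P L P' L' f) (Lp t) (Pr y v')"
              using c2 cl by simp
            obtain w'' where "(t, w'') \<in> calP P L P' L' f" "Pr y v' = Pr t w'' \<or> Pr y v' = Rp w''"
              using col_Lp[OF cc] by blast
            then have "t = y" by auto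
            then show False using t(1) bad calP_iff by blast
          qed
        qed simp
      qed
    qed
  qed
qed

end
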